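(* Let $G=HN$ be a finite non-Frobenius $2$-transitive affine group of degree $p^k$ ($p$ prime), with $N\cong\mathbb F_p^k$ and $H$ the stabiliser of $0$, and suppose $H\le\Gamma\mathrm L_1(p^k)$. If $\kappa(G)=2$, then $k$ is even and $|H|=2(p^k-1)$.
   Context: A derangement is an element fixing no point; $\kappa(G)$ is the number of conjugacy classes of derangements. A Frobenius group is a transitive non-regular group in which only the identity fixes more than one point. $\Gamma\mathrm L_1(p^k)=\mathbb F_{p^k}^\times\rtimes\mathrm{Gal}(\mathbb F_{p^k}/\mathbb F_p)$ acting semilinearly on $\mathbb F_{p^k}\cong\mathbb F_p^k$. *)

theory Defs
  imports "HOL-Algebra.Algebra"
begin

text \<open>Permutations of a set S are elements of BijGroup S (extensional bijections).\<close>

definition gammaL1 :: "('a, 'b) ring_scheme \<Rightarrow> ('a \<Rightarrow> 'a) set" where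
  "gammaL1 F = {restrict (\<lambda>x. a \<otimes>\<^bsub>F\<^esub> \<sigma> x) (carrier F) | a \<sigma>.
      a \<in> carrier F - {\<zero>\<^bsub>F\<^esub>} \<and> \<sigma> \<in> ring_iso F F}"

definition affine_group :: "('a, 'b) ring_scheme \<Rightarrow> ('a \<Rightarrow> 'a) set \<Rightarrow> ('a \<Rightarrow> 'a) set" where
  "affine_group F H = {restrict (\<lambda>x. h x \<oplus>\<^bsub>F\<^esub> v) (carrier F) | h v.
      h \<in> H \<and> v \<in> carrier F}"

definition derangement :: "'a set \<Rightarrow> ('a \<Rightarrow> 'a) \<Rightarrow> bool" where
  "derangement S g \<longleftrightarrow> (\<forall>x\<in>S. g x \<noteq> x)"

definition conj_class :: "('g, 'c) monoid_scheme \<Rightarrow> 'g \<Rightarrow> 'g set" where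
  "conj_class G g = {x \<otimes>\<^bsub>G\<^esub> g \<otimes>\<^bsub>G\<^esub> inv\<^bsub>G\<^esub> x | x. x \<in> carrier G}"

definition kappa :: "'a set \<Rightarrow> ('a \<Rightarrow> 'a) set \<Rightarrow> nat" where
  "kappa S G = card (conj_class ((BijGroup S)\<lparr>carrier := G\<rparr>) ` {g \<in> G. derangement S g})"

definition perm_transitive :: "'a set \<Rightarrow> ('a \<Rightarrow> 'a) set \<Rightarrow> bool" where
  "perm_transitive S G \<longleftrightarrow> (\<forall>x\<in>S. \<forall>y\<in>S. \<exists>g\<in>G. g x = y)"

definition two_transitive :: "'a set \<Rightarrow> ('a \<Rightarrow> 'a) set \<Rightarrow> bool" where
  "two_transitive S G \<longleftrightarrow> (\<forall>x\<in>S. \<forall>y\<in>S. \<forall>x'\<in>S. \<forall>y'\<in>S.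
      x \<noteq> y \<longrightarrow> x' \<noteq> y' \<longrightarrow> (\<exists>g\<in>G. g x = x' \<and> g y = y'))"

definition frobenius :: "'a set \<Rightarrow> ('a \<Rightarrow> 'a) set \<Rightarrow> bool" where
  "frobenius S G \<longleftrightarrow> perm_transitive S G
     \<and> (\<exists>g\<in>G. g \<noteq> (\<lambda>x\<in>S. x) \<and> (\<exists>x\<in>S. g x = x))
     \<and> (\<forall>g\<in>G. (\<exists>x\<in>S. \<exists>y\<in>S. x \<noteq> y \<and> g x = x \<and> g y = y) \<longrightarrow> g = (\<lambda>x\<in>S. x))"

end

theory Submission
  imports Defs
begin


lemma (in field) aut_power:
  assumes fin: "finite (carrier R)" and s: "ff \<in> ring_hom R R"
  shows "\<exists>n. \<forall>x\<in>carrier R - {\<zero>}. ff x = x [^] (n::nat)"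
proof -
  interpret h: ring_hom_ring R R ff using s by (simp add: ring_hom_ringI2 ring_axioms)
  obtain w where w: "w \<in> carrier R - {\<zero>}" and gen: "carrier R - {\<zero>} = {w[^]i | i::nat. i \<in> UNIV}"
    using finite_field_mult_group_has_gen[OF fin] by (auto simp: nat_pow_mult_of)
  have "ff w \<noteq> \<zero>"
  proof
    assume "ff w = \<zero>"
    have iw: "inv w \<in> carrier R" using w by (simp add: field_Units)
    have "ff (w \<otimes> inv w) = \<zero>" using w iw \<open>ff w = \<zero>\<close> h.hom_mult h.hom_closed by simp
    moreover have "w \<otimes> inv w = \<one>" using w by (simp add: field_Units)
    ultimately show False by simp
  qed
  then have "ff w \<in> carrier R - {\<zero>}" using w by simp
  then obtain n where n: "ff w = w [^] (n::nat)" using gen by auto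
  show ?thesis
  proof (intro exI ballI)
    fix x assume x: "x \<in> carrier R - {\<zero>}"
    then obtain i where i: "x = w [^] (i::nat)" using gen by auto
    have "ff x = (ff w) [^] i" using i w h.hom_nat_pow by auto
    also have "\<dots> = w [^] (n * i)" using n w by (simp add: nat_pow_pow)
    also have "\<dots> = x [^] n" using i w by (simp add: nat_pow_pow mult.commute)
    finally show "ff x = x [^] n" .
  qed
qed

lemma (in field) aut_comm:
  assumes fin: "finite (carrier R)" and s: "ff \<in> ring_hom R R" and t: "gg \<in> ring_hom R R"
    and x: "x \<in> carrier R"
  shows "ff (gg x) = gg (ff x)"
proof (cases "x = \<zero>")
  case True
  interpret h1: ring_hom_ring R R ff using s by (simp add: ring_hom_ringI2 ring_axioms)
  interpret h2: ring_hom_ring R R gg using t by (simp add: ring_hom_ringI2 ring_axioms)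
  show ?thesis using True by simp
next
  case False
  obtain n where n: "\<forall>x\<in>carrier R - {\<zero>}. ff x = x [^] (n::nat)" using aut_power[OF fin s] by blast
  obtain m where m: "\<forall>x\<in>carrier R - {\<zero>}. gg x = x [^] (m::nat)" using aut_power[OF fin t] by blast
  have pw: "y [^] (j::nat) \<in> carrier R - {\<zero>}" if "y \<in> carrier R - {\<zero>}" for y j
  proof -
    interpret G: group "Multiplicative_Group.mult_of R" by (rule field_mult_group)
    show ?thesis using G.nat_pow_closed[of y j] that by (simp add: Multiplicative_Group.nat_pow_mult_of)
  qed
  have xx: "x \<in> carrier R - {\<zero>}" using x False by simp
  have "ff (gg x) = (x [^] m) [^] n" using m n pw[OF xx] xx by simp
  also have "\<dots> = (x [^] n) [^] m" using x by (simp add: nat_pow_pow mult.commute)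
  also have "\<dots> = gg (ff x)" using m n pw[OF xx] xx by simp
  finally show ?thesis .
qed


lemma BG_mult: "f \<in> Bij S \<Longrightarrow> g \<in> Bij S \<Longrightarrow> x \<in> S \<Longrightarrow> (f \<otimes>\<^bsub>BijGroup S\<^esub> g) x = f (g x)"
  by (simp add: BijGroup_def compose_def)
lemma BG_mclosed: "f \<in> Bij S \<Longrightarrow> g \<in> Bij S \<Longrightarrow> f \<otimes>\<^bsub>BijGroup S\<^esub> g \<in> Bij S"
  by (simp add: BijGroup_def compose_Bij)
lemma BG_one: "\<one>\<^bsub>BijGroup S\<^esub> = (\<lambda>x\<in>S. x)" by (simp add: BijGroup_def)
lemma BG_carrier: "carrier (BijGroup S) = Bij S" by (simp add: BijGroup_def)
lemma Bij_eqI: "f \<in> Bij S \<Longrightarrow> g \<in> Bij S \<Longrightarrow> (\<And>x. x \<in> S \<Longrightarrow> f x = g x) \<Longrightarrow> f = g"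
  by (rule extensionalityI[OF Bij_imp_extensional Bij_imp_extensional])
lemma finite_Bij: "finite S \<Longrightarrow> finite (Bij S)"
proof -
  assume "finite S"
  moreover have "Bij S \<subseteq> S \<rightarrow>\<^sub>E S" by (auto simp: PiE_def Bij_imp_extensional dest: Bij_imp_funcset)
  moreover have "finite (S \<rightarrow>\<^sub>E S)" if "finite S" using that by (intro finite_PiE) auto
  ultimately show ?thesis by (meson finite_subset)
qed

locale aff = field R for R (structure) +
  fixes H
  assumes fin: "finite (carrier R)"
    and sub: "subgroup H (BijGroup (carrier R))"
    and gam: "H \<subseteq> gammaL1 R"
begin

abbreviation "BG \<equiv> BijGroup (carrier R)"

lemma BGg: "group BG" by (rule group_BijGroup)

lemma H_Bij: "h \<in> H \<Longrightarrow> h \<in> Bij (carrier R)"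
  using subgroup.subset[OF sub] by (auto simp: BG_carrier)

lemma H_form: assumes "h \<in> H"
  obtains a f where "a \<in> carrier R" "a \<noteq> \<zero>" "f \<in> ring_iso R R" "h = (\<lambda>x\<in>carrier R. a \<otimes> f x)"
  using gam assms unfolding gammaL1_def by blast

lemma H_closed: "h \<in> H \<Longrightarrow> x \<in> carrier R \<Longrightarrow> h x \<in> carrier R"
  using H_Bij Bij_imp_funcset by blast

lemma H_add: assumes h: "h \<in> H" and x: "x \<in> carrier R" and y: "y \<in> carrier R"
  shows "h (x \<oplus> y) = h x \<oplus> h y"
proof -
  obtain a f where a: "a \<in> carrier R" and f: "f \<in> ring_iso R R" and hd: "h = (\<lambda>x\<in>carrier R. a \<otimes> f x)"
    using H_form[OF h] by blast
  have fh: "f \<in> ring_hom R R" using f by (simp add: ring_iso_def)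
  show ?thesis using x y a hd ring_hom_add[OF fh x y] ring_hom_closed[OF fh]
    by (simp add: r_distr)
qed

lemma (in ring) dbl_zero: assumes x: "x \<in> carrier R" and e: "x = x \<oplus> x" shows "x = \<zero>"
proof -
  have "x \<oplus> x = x \<oplus> \<zero>" by (subst r_zero[OF x]) (rule e[symmetric])
  then show ?thesis using x by simp
qed

lemma H_zero: assumes h: "h \<in> H" shows "h \<zero> = \<zero>"
proof -
  have "h \<zero> = h \<zero> \<oplus> h \<zero>" using H_add[OF h zero_closed zero_closed] by (simp only: l_zero[OF zero_closed])
  then show ?thesis using H_closed[OF h zero_closed] dbl_zero by blast
qed

lemma H_neg: assumes h: "h \<in> H" and x: "x \<in> carrier R" shows "h (\<ominus> x) = \<ominus> h x"
proof -
  have "h (\<ominus> x \<oplus> x) = \<zero>" using x H_zero[OF h] by (simp add: l_neg)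
  then have "h (\<ominus> x) \<oplus> h x = \<zero>" using H_add[OF h _ x, of "\<ominus> x"] x by simp
  then show ?thesis using H_closed[OF h] x minus_equality[of "h (\<ominus> x)" "h x"] by simp
qed

lemma H_minus: assumes h: "h \<in> H" and x: "x \<in> carrier R" and y: "y \<in> carrier R"
  shows "h (x \<ominus> y) = h x \<ominus> h y"
  using H_add[OF h x, of "\<ominus> y"] H_neg[OF h y] x y by (simp add: a_minus_def)

lemma H_inj: "h \<in> H \<Longrightarrow> inj_on h (carrier R)"
  using H_Bij by (auto simp: Bij_def bij_betw_def)
lemma H_surj: "h \<in> H \<Longrightarrow> h ` carrier R = carrier R"
  using H_Bij by (auto simp: Bij_def bij_betw_def)

lemma H_mult: "h \<in> H \<Longrightarrow> g \<in> H \<Longrightarrow> x \<in> carrier R \<Longrightarrow> (h \<otimes>\<^bsub>BG\<^esub> g) x = h (g x)"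
  by (rule BG_mult[OF H_Bij H_Bij])

lemma H_inv: assumes h: "h \<in> H" and x: "x \<in> carrier R"
  shows "(inv\<^bsub>BG\<^esub> h) (h x) = x" "h ((inv\<^bsub>BG\<^esub> h) x) = x" "inv\<^bsub>BG\<^esub> h \<in> H"
proof -
  show hi: "inv\<^bsub>BG\<^esub> h \<in> H" using subgroup.m_inv_closed[OF sub h] .
  have hc: "h \<in> carrier BG" using H_Bij[OF h] by (simp add: BG_carrier)
  have l: "inv\<^bsub>BG\<^esub> h \<otimes>\<^bsub>BG\<^esub> h = \<one>\<^bsub>BG\<^esub>" by (rule group.l_inv[OF BGg hc])
  have r: "h \<otimes>\<^bsub>BG\<^esub> inv\<^bsub>BG\<^esub> h = \<one>\<^bsub>BG\<^esub>" by (rule group.r_inv[OF BGg hc])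
  have "(inv\<^bsub>BG\<^esub> h \<otimes>\<^bsub>BG\<^esub> h) x = x" unfolding l BG_one using x by simp
  then show "(inv\<^bsub>BG\<^esub> h) (h x) = x" unfolding H_mult[OF hi h x] .
  have "(h \<otimes>\<^bsub>BG\<^esub> inv\<^bsub>BG\<^esub> h) x = x" unfolding r BG_one using x by simp
  then show "h ((inv\<^bsub>BG\<^esub> h) x) = x" unfolding H_mult[OF h hi x] .
qed

lemma one_H: "\<one>\<^bsub>BG\<^esub> \<in> H" using subgroup.one_closed[OF sub] .

definition "A = affine_group R H"

lemma A_I: "h \<in> H \<Longrightarrow> v \<in> carrier R \<Longrightarrow> (\<lambda>x\<in>carrier R. h x \<oplus> v) \<in> A"
  unfolding A_def affine_group_def by blast

lemma A_E: assumes "g \<in> A"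
  obtains h v where "h \<in> H" "v \<in> carrier R" "g = (\<lambda>x\<in>carrier R. h x \<oplus> v)"
  using assms unfolding A_def affine_group_def by blast

lemma A_Bij: assumes h: "h \<in> H" and v: "v \<in> carrier R"
  shows "(\<lambda>x\<in>carrier R. h x \<oplus> v) \<in> Bij (carrier R)"
proof -
  let ?g = "(\<lambda>x\<in>carrier R. h x \<oplus> v)"
  have inj: "inj_on ?g (carrier R)"
  proof (rule inj_onI)
    fix x y assume x: "x \<in> carrier R" and y: "y \<in> carrier R" and e: "?g x = ?g y"
    then have "h x = h y" using H_closed[OF h] v by simp
    then show "x = y" using H_inj[OF h] x y by (simp add: inj_on_def)
  qed
  have sub: "?g ` carrier R \<subseteq> carrier R" using H_closed[OF h] v by auto
  have "?g ` carrier R = carrier R" using endo_inj_surj[OF fin sub inj] .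
  then show ?thesis using inj by (simp add: Bij_def bij_betw_def)
qed

lemma A_sub: "subgroup A BG"
proof (rule group.subgroupI[OF BGg])
  show "A \<subseteq> carrier BG" using A_Bij by (auto elim!: A_E simp: BG_carrier)
  show "A \<noteq> {}" using A_I[OF one_H zero_closed] by blast
next
  fix g assume "g \<in> A"
  then obtain h v where h: "h \<in> H" and v: "v \<in> carrier R" and g: "g = (\<lambda>x\<in>carrier R. h x \<oplus> v)"
    by (rule A_E)
  let ?hi = "inv\<^bsub>BG\<^esub> h"
  have hi: "?hi \<in> H" using H_inv[OF h zero_closed] by blast
  let ?y = "(\<lambda>x\<in>carrier R. ?hi x \<oplus> \<ominus> ?hi v)"
  have yA: "?y \<in> A" using A_I[OF hi] H_closed[OF hi v] by simp
  have "?y \<otimes>\<^bsub>BG\<^esub> g = \<one>\<^bsub>BG\<^esub>"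
  proof (rule Bij_eqI)
    have yB: "?y \<in> Bij (carrier R)" using A_Bij[OF hi] H_closed[OF hi v] by simp
    show "?y \<otimes>\<^bsub>BG\<^esub> g \<in> Bij (carrier R)"
      using BG_mclosed[OF yB A_Bij[OF h v]] g by simp
    show "\<one>\<^bsub>BG\<^esub> \<in> Bij (carrier R)" by (simp add: BG_one id_Bij)
    fix x assume x: "x \<in> carrier R"
    have "(?y \<otimes>\<^bsub>BG\<^esub> g) x = ?y (g x)"
      using BG_mult[OF A_Bij[OF hi] A_Bij[OF h v] x] H_closed[OF hi v] g by simp
    also have "\<dots> = ?hi (h x \<oplus> v) \<oplus> \<ominus> ?hi v" using g x H_closed[OF h x] v by simp
    also have "\<dots> = x" using H_add[OF hi H_closed[OF h x] v] H_inv[OF h x] H_closed[OF hi v] x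
      by (simp add: a_assoc r_neg)
    finally show "(?y \<otimes>\<^bsub>BG\<^esub> g) x = \<one>\<^bsub>BG\<^esub> x" using x by (simp add: BG_one)
  qed
  then have "inv\<^bsub>BG\<^esub> g = ?y"
    using group.inv_equality[OF BGg] A_Bij[OF h v] A_Bij[OF hi] H_closed[OF hi v] g
    by (simp add: BG_carrier)
  then show "inv\<^bsub>BG\<^esub> g \<in> A" using yA by simp
next
  fix g1 g2 assume "g1 \<in> A" "g2 \<in> A"
  then obtain h1 v1 h2 v2 where h1: "h1 \<in> H" and v1: "v1 \<in> carrier R" and g1: "g1 = (\<lambda>x\<in>carrier R. h1 x \<oplus> v1)"
    and h2: "h2 \<in> H" and v2: "v2 \<in> carrier R" and g2: "g2 = (\<lambda>x\<in>carrier R. h2 x \<oplus> v2)"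
    by (metis A_E)
  have h12: "h1 \<otimes>\<^bsub>BG\<^esub> h2 \<in> H" using subgroup.m_closed[OF sub h1 h2] .
  have w: "h1 v2 \<oplus> v1 \<in> carrier R" using H_closed[OF h1 v2] v1 by simp
  have "g1 \<otimes>\<^bsub>BG\<^esub> g2 = (\<lambda>x\<in>carrier R. (h1 \<otimes>\<^bsub>BG\<^esub> h2) x \<oplus> (h1 v2 \<oplus> v1))"
  proof (rule Bij_eqI)
    show "g1 \<otimes>\<^bsub>BG\<^esub> g2 \<in> Bij (carrier R)"
      using BG_mclosed[OF A_Bij[OF h1 v1] A_Bij[OF h2 v2]] g1 g2 by simp
    show "(\<lambda>x\<in>carrier R. (h1 \<otimes>\<^bsub>BG\<^esub> h2) x \<oplus> (h1 v2 \<oplus> v1)) \<in> Bij (carrier R)"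
      using A_Bij[OF h12 w] .
    fix x assume x: "x \<in> carrier R"
    have "(g1 \<otimes>\<^bsub>BG\<^esub> g2) x = g1 (g2 x)" using BG_mult[OF A_Bij[OF h1 v1] A_Bij[OF h2 v2] x] g1 g2 by simp
    also have "\<dots> = h1 (h2 x) \<oplus> (h1 v2 \<oplus> v1)"
      using g1 g2 x H_closed[OF h2 x] v2 H_add[OF h1 H_closed[OF h2 x] v2] H_closed[OF h1] v1
      by (simp add: a_assoc)
    finally show "(g1 \<otimes>\<^bsub>BG\<^esub> g2) x = (\<lambda>x\<in>carrier R. (h1 \<otimes>\<^bsub>BG\<^esub> h2) x \<oplus> (h1 v2 \<oplus> v1)) x"
      using x H_mult[OF h1 h2 x] by simp
  qed
  then show "g1 \<otimes>\<^bsub>BG\<^esub> g2 \<in> A" using A_I[OF h12 w] by simp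
qed

end


lemma group_cc_conj:
  fixes G (structure)
  assumes G: "group G" and c: "c \<in> carrier G" and g: "g \<in> carrier G"
  shows "conj_class G (c \<otimes>\<^bsub>G\<^esub> g \<otimes>\<^bsub>G\<^esub> inv\<^bsub>G\<^esub> c) = conj_class G g"
proof -
  interpret group G by (rule G)
  show ?thesis
  proof
    show "conj_class G (c \<otimes> g \<otimes> inv c) \<subseteq> conj_class G g"
    proof
      fix y assume "y \<in> conj_class G (c \<otimes> g \<otimes> inv c)"
      then obtain x where x: "x \<in> carrier G" and y: "y = x \<otimes> (c \<otimes> g \<otimes> inv c) \<otimes> inv x"
        unfolding conj_class_def by blast
      have "y = (x \<otimes> c) \<otimes> g \<otimes> inv (x \<otimes> c)"
        using x c g y by (simp add: inv_mult_group m_assoc)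
      then show "y \<in> conj_class G g" unfolding conj_class_def using x c by blast
    qed
    show "conj_class G g \<subseteq> conj_class G (c \<otimes> g \<otimes> inv c)"
    proof
      fix y assume "y \<in> conj_class G g"
      then obtain x where x: "x \<in> carrier G" and y: "y = x \<otimes> g \<otimes> inv x"
        unfolding conj_class_def by blast
      have cc: "inv c \<otimes> (c \<otimes> z) = z" if "z \<in> carrier G" for z using that c by (simp add: m_assoc[symmetric])
      have "y = (x \<otimes> inv c) \<otimes> (c \<otimes> g \<otimes> inv c) \<otimes> inv (x \<otimes> inv c)"
        using x c g y by (simp add: inv_mult_group m_assoc cc)
      then show "y \<in> conj_class G (c \<otimes> g \<otimes> inv c)" unfolding conj_class_def using x c by blast
    qed
  qed
qed

lemma group_cc_self: fixes G (structure) assumes G: "group G" and g: "g \<in> carrier G" shows "g \<in> conj_class G g"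
proof -
  interpret group G by (rule G)
  have "g = \<one> \<otimes> g \<otimes> inv \<one>" using g by simp
  then show ?thesis unfolding conj_class_def by blast
qed

context aff begin

abbreviation "M \<equiv> BG\<lparr>carrier := A\<rparr>"

lemma Mg: "group M" using subgroup.subgroup_is_group[OF A_sub BGg] .

lemma A_Bij': "g \<in> A \<Longrightarrow> g \<in> Bij (carrier R)"
  using subgroup.subset[OF A_sub] by (auto simp: BG_carrier)

lemma M_inv: "c \<in> A \<Longrightarrow> inv\<^bsub>M\<^esub> c = inv\<^bsub>BG\<^esub> c"
  using group.m_inv_consistent[OF BGg A_sub] by simp

lemma cc_M: "conj_class M g = {c \<otimes>\<^bsub>BG\<^esub> g \<otimes>\<^bsub>BG\<^esub> inv\<^bsub>BG\<^esub> c | c. c \<in> A}"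
proof -
  have "conj_class M g = (\<lambda>x. x \<otimes>\<^bsub>BG\<^esub> g \<otimes>\<^bsub>BG\<^esub> inv\<^bsub>M\<^esub> x) ` A" unfolding conj_class_def by auto
  also have "\<dots> = (\<lambda>x. x \<otimes>\<^bsub>BG\<^esub> g \<otimes>\<^bsub>BG\<^esub> inv\<^bsub>BG\<^esub> x) ` A" using M_inv by (intro image_cong) auto
  finally show ?thesis by auto
qed

lemma cc_self: "g \<in> A \<Longrightarrow> g \<in> conj_class M g"
  using group_cc_self[OF Mg] by simp

lemma cc_conj: assumes c: "c \<in> A" and g: "g \<in> A"
  shows "conj_class M (c \<otimes>\<^bsub>BG\<^esub> g \<otimes>\<^bsub>BG\<^esub> inv\<^bsub>BG\<^esub> c) = conj_class M g"
  using group_cc_conj[OF Mg, of c g] c g M_inv[OF c] by simp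

lemma trans1: assumes tt: "two_transitive (carrier R) A" and y: "y \<in> carrier R" "y \<noteq> \<zero>"
  shows "\<exists>h\<in>H. h \<one> = y"
proof -
  obtain g where g: "g \<in> A" "g \<zero> = \<zero>" "g \<one> = y"
    using tt y unfolding two_transitive_def by (metis one_closed zero_closed zero_not_one)
  then obtain h v where h: "h \<in> H" and v: "v \<in> carrier R" and gd: "g = (\<lambda>x\<in>carrier R. h x \<oplus> v)"
    by (metis A_E)
  have "v = \<zero>" using g(2) gd H_zero[OF h] v by simp
  then have "h \<one> = y" using g(3) gd H_closed[OF h one_closed] by simp
  then show ?thesis using h by blast
qed

definition "H1 = {h\<in>H. h \<one> = \<one>}"

lemma orbit_stab: assumes tr: "\<And>y. y \<in> carrier R \<Longrightarrow> y \<noteq> \<zero> \<Longrightarrow> \<exists>h\<in>H. h \<one> = y"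
  shows "card H = card H1 * (card (carrier R) - 1)"
proof -
  define gy where "gy y = (SOME h. h \<in> H \<and> h \<one> = y)" for y
  have gy: "gy y \<in> H" "gy y \<one> = y" if "y \<in> carrier R - {\<zero>}" for y
  proof -
    have "\<exists>h. h \<in> H \<and> h \<one> = y" using tr[of y] that by auto
    from someI_ex[OF this] show "gy y \<in> H" "gy y \<one> = y" unfolding gy_def by auto
  qed
  let ?P = "\<lambda>(s, y). gy y \<otimes>\<^bsub>BG\<^esub> s"
  have hc: "h \<in> carrier BG" if "h \<in> H" for h using H_Bij[OF that] by (simp add: BG_carrier)
  have "bij_betw ?P (H1 \<times> (carrier R - {\<zero>})) H"
  proof (rule bij_betwI')
    fix a b assume a: "a \<in> H1 \<times> (carrier R - {\<zero>})" and b: "b \<in> H1 \<times> (carrier R - {\<zero>})"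
    obtain s y where a': "a = (s, y)" by (cases a)
    obtain s' y' where b': "b = (s', y')" by (cases b)
    have s: "s \<in> H" "s \<one> = \<one>" "y \<in> carrier R - {\<zero>}" using a a' by (auto simp: H1_def)
    have s': "s' \<in> H" "s' \<one> = \<one>" "y' \<in> carrier R - {\<zero>}" using b b' by (auto simp: H1_def)
    show "(?P a = ?P b) = (a = b)"
    proof
      assume e: "?P a = ?P b"
      then have e1: "gy y \<otimes>\<^bsub>BG\<^esub> s = gy y' \<otimes>\<^bsub>BG\<^esub> s'" using a' b' by simp
      have y1: "(gy y \<otimes>\<^bsub>BG\<^esub> s) \<one> = y" using H_mult[OF gy(1)[OF s(3)] s(1) one_closed] s gy(2)[OF s(3)] by simp
      have y2: "(gy y' \<otimes>\<^bsub>BG\<^esub> s') \<one> = y'" using H_mult[OF gy(1)[OF s'(3)] s'(1) one_closed] s' gy(2)[OF s'(3)] by simp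
      have yy: "y = y'" using e1 y1 y2 by metis
      have gc: "gy y \<in> carrier BG" by (rule hc[OF gy(1)[OF s(3)]])
      have m: "gy y \<otimes>\<^bsub>BG\<^esub> s' \<in> carrier BG" by (rule monoid.m_closed[OF group.is_monoid[OF BGg] gc hc[OF s'(1)]])
      have "s = inv\<^bsub>BG\<^esub> (gy y) \<otimes>\<^bsub>BG\<^esub> (gy y \<otimes>\<^bsub>BG\<^esub> s')"
        using group.inv_solve_left[OF BGg hc[OF s(1)] gc m] e1 yy by simp
      moreover have "s' = inv\<^bsub>BG\<^esub> (gy y) \<otimes>\<^bsub>BG\<^esub> (gy y \<otimes>\<^bsub>BG\<^esub> s')"
        using group.inv_solve_left[OF BGg hc[OF s'(1)] gc m] by simp
      ultimately have "s = s'" by simp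
      then show "a = b" using a' b' yy by simp
    qed simp
  next
    fix a assume "a \<in> H1 \<times> (carrier R - {\<zero>})"
    then show "?P a \<in> H" using gy subgroup.m_closed[OF sub] by (auto simp: H1_def)
  next
    fix h assume h: "h \<in> H"
    let ?y = "h \<one>"
    have yc: "?y \<in> carrier R - {\<zero>}"
    proof -
      have "h \<one> \<noteq> \<zero>"
      proof
        assume "h \<one> = \<zero>"
        then have "h \<one> = h \<zero>" using H_zero[OF h] by simp
        then have "\<one> = \<zero>" using inj_onD[OF H_inj[OF h] _ one_closed zero_closed] by blast
        then show False by simp
      qed
      then show ?thesis using H_closed[OF h one_closed] by simp
    qed
    let ?s = "inv\<^bsub>BG\<^esub> (gy ?y) \<otimes>\<^bsub>BG\<^esub> h"
    have gi: "inv\<^bsub>BG\<^esub> (gy ?y) \<in> H" using H_inv(3)[OF gy(1)[OF yc] one_closed] .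
    have sH: "?s \<in> H" using subgroup.m_closed[OF sub gi h] .
    have "?s \<one> = \<one>" using H_mult[OF gi h one_closed] H_inv(1)[OF gy(1)[OF yc] one_closed] gy(2)[OF yc] by simp
    then have "(?s, ?y) \<in> H1 \<times> (carrier R - {\<zero>})" using sH yc by (simp add: H1_def)
    moreover have "h = ?P (?s, ?y)"
      using group.inv_solve_left[OF BGg hc[OF sH] hc[OF gy(1)[OF yc]] hc[OF h]] by simp
    ultimately show "\<exists>a\<in>H1 \<times> (carrier R - {\<zero>}). h = ?P a" by blast
  qed
  then have "card H = card (H1 \<times> (carrier R - {\<zero>}))" by (simp add: bij_betw_same_card)
  also have "\<dots> = card H1 * (card (carrier R) - 1)" using fin by (simp add: card_cartesian_product)
  finally show ?thesis .
qed

end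


lemma (in ring) add_minus_cancel: assumes a: "a \<in> carrier R" and b: "b \<in> carrier R" shows "(a \<oplus> b) \<ominus> a = b"
proof -
  have "(a \<oplus> b) \<ominus> a = (b \<oplus> a) \<oplus> \<ominus> a" unfolding a_minus_def using a b by (simp add: a_comm)
  also have "\<dots> = b \<oplus> (a \<oplus> \<ominus> a)" using a b by (simp add: a_assoc)
  also have "\<dots> = b" using a b by (simp add: r_neg)
  finally show ?thesis .
qed
lemma (in ring) add_minus_cancel2: assumes a: "a \<in> carrier R" and x: "x \<in> carrier R" shows "a \<oplus> (x \<ominus> a) = x"
proof -
  have "a \<oplus> (x \<ominus> a) = x \<oplus> (a \<oplus> \<ominus> a)" unfolding a_minus_def using a x by (simp add: a_lcomm)
  also have "\<dots> = x" using a x by (simp add: r_neg)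
  finally show ?thesis .
qed

context aff begin

lemma conj_lin:
  assumes h: "h \<in> H" and v: "v \<in> carrier R" and h': "h' \<in> H" and v': "v' \<in> carrier R"
    and cc: "(\<lambda>x\<in>carrier R. h' x \<oplus> v') \<in> conj_class M (\<lambda>x\<in>carrier R. h x \<oplus> v)"
  shows "\<exists>k\<in>H. \<forall>x\<in>carrier R. k (h x) = h' (k x)"
proof -
  interpret B: group BG by (rule BGg)
  let ?g = "\<lambda>x\<in>carrier R. h x \<oplus> v" and ?g' = "\<lambda>x\<in>carrier R. h' x \<oplus> v'"
  obtain c where cA: "c \<in> A" and ce: "?g' = c \<otimes>\<^bsub>BG\<^esub> ?g \<otimes>\<^bsub>BG\<^esub> inv\<^bsub>BG\<^esub> c"
    using cc unfolding cc_M by blast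
  have gB: "?g \<in> carrier BG" "?g' \<in> carrier BG" "c \<in> carrier BG"
    using A_Bij[OF h v] A_Bij[OF h' v'] A_Bij'[OF cA] by (auto simp: BG_carrier)
  have comm: "?g' \<otimes>\<^bsub>BG\<^esub> c = c \<otimes>\<^bsub>BG\<^esub> ?g"
    unfolding ce using gB by (simp add: B.m_assoc)
  obtain k w where k: "k \<in> H" and w: "w \<in> carrier R" and cd: "c = (\<lambda>x\<in>carrier R. k x \<oplus> w)"
    using cA by (rule A_E)
  have E: "h' (k x \<oplus> w) \<oplus> v' = k (h x \<oplus> v) \<oplus> w" if x: "x \<in> carrier R" for x
  proof -
    have "(?g' \<otimes>\<^bsub>BG\<^esub> c) x = (c \<otimes>\<^bsub>BG\<^esub> ?g) x" using comm by simp
    moreover have "(?g' \<otimes>\<^bsub>BG\<^esub> c) x = ?g' (c x)" using gB x by (intro BG_mult) (auto simp: BG_carrier)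
    moreover have "(c \<otimes>\<^bsub>BG\<^esub> ?g) x = c (?g x)" using gB x by (intro BG_mult) (auto simp: BG_carrier)
    ultimately show ?thesis using x cd H_closed[OF k] H_closed[OF h] v w by simp
  qed
  have E0: "h' w \<oplus> v' = k v \<oplus> w"
    using E[OF zero_closed] H_zero[OF h] H_zero[OF k] w v by simp
  have "\<forall>x\<in>carrier R. k (h x) = h' (k x)"
  proof
    fix x assume x: "x \<in> carrier R"
    have hx: "h x \<in> carrier R" "k x \<in> carrier R" "k (h x) \<in> carrier R" "h' (k x) \<in> carrier R"
      using H_closed h k h' x by auto
    have "h' (k x) \<oplus> (h' w \<oplus> v') = k (h x) \<oplus> (k v \<oplus> w)"
      using E[OF x] H_add[OF h' hx(2) w] H_add[OF k hx(1) v] hx H_closed[OF h' w] H_closed[OF k v] v v' w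
      by (simp add: a_assoc)
    then have "h' (k x) \<oplus> (k v \<oplus> w) = k (h x) \<oplus> (k v \<oplus> w)" using E0 by simp
    then show "k (h x) = h' (k x)" using hx H_closed[OF k v] w by simp
  qed
  then show ?thesis using k by blast
qed

lemma H1_aut: assumes "h \<in> H1" shows "\<exists>f\<in>ring_iso R R. \<forall>x\<in>carrier R. h x = f x"
proof -
  have h: "h \<in> H" "h \<one> = \<one>" using assms by (auto simp: H1_def)
  obtain a f where a: "a \<in> carrier R" and f: "f \<in> ring_iso R R" and hd: "h = (\<lambda>x\<in>carrier R. a \<otimes> f x)"
    using H_form[OF h(1)] by blast
  have fh: "f \<in> ring_hom R R" using f by (simp add: ring_iso_def)
  have "a = \<one>" using h(2) hd a ring_hom_one[OF fh] by simp
  then have "\<forall>x\<in>carrier R. h x = f x" using hd ring_hom_closed[OF fh] by simp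
  then show ?thesis using f by blast
qed

lemma H1_rigid:
  assumes h1: "h1 \<in> H1" and h2: "h2 \<in> H1" and k: "k \<in> H"
    and c: "\<forall>x\<in>carrier R. k (h1 x) = h2 (k x)"
  shows "h1 = h2"
proof -
  obtain f1 where f1: "f1 \<in> ring_iso R R" "\<forall>x\<in>carrier R. h1 x = f1 x" using H1_aut[OF h1] by blast
  obtain f2 where f2: "f2 \<in> ring_iso R R" "\<forall>x\<in>carrier R. h2 x = f2 x" using H1_aut[OF h2] by blast
  obtain a t where a: "a \<in> carrier R" "a \<noteq> \<zero>" and t: "t \<in> ring_iso R R" and kd: "k = (\<lambda>x\<in>carrier R. a \<otimes> t x)"
    using H_form[OF k] by blast
  have f1h: "f1 \<in> ring_hom R R" and f2h: "f2 \<in> ring_hom R R" and th: "t \<in> ring_hom R R"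
    using f1 f2 t by (auto simp: ring_iso_def)
  have h11: "h1 \<one> = \<one>" using h1 by (simp add: H1_def)
  have "k (h1 \<one>) = h2 (k \<one>)" using c by simp
  then have fa: "f2 a = a" using h11 kd a ring_hom_one[OF th] f2(2) by simp
  have eq: "f1 (t x) = f2 (t x)" if x: "x \<in> carrier R" for x
  proof -
    have tx: "t x \<in> carrier R" using ring_hom_closed[OF th x] .
    have "k (h1 x) = a \<otimes> t (f1 x)" using kd f1(2) x ring_hom_closed[OF f1h x] by simp
    moreover have "h2 (k x) = a \<otimes> f2 (t x)"
      using kd f2(2) x a tx fa ring_hom_mult[OF f2h a(1) tx] by simp
    ultimately have "a \<otimes> t (f1 x) = a \<otimes> f2 (t x)" using c x by simp
    then have "t (f1 x) = f2 (t x)"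
      using m_lcancel[OF a(2) a(1)] ring_hom_closed[OF th ring_hom_closed[OF f1h x]] ring_hom_closed[OF f2h tx]
      by blast
    then show ?thesis using aut_comm[OF fin f1h th x] by simp
  qed
  have "h1 y = h2 y" if y: "y \<in> carrier R" for y
  proof -
    have "t ` carrier R = carrier R" using t by (simp add: ring_iso_def bij_betw_def)
    then obtain x where x: "x \<in> carrier R" "y = t x" using y by auto
    then show ?thesis using eq f1(2) f2(2) y by simp
  qed
  moreover have "h1 \<in> Bij (carrier R)" "h2 \<in> Bij (carrier R)" using h1 h2 H_Bij by (auto simp: H1_def)
  ultimately show ?thesis using Bij_eqI by blast
qed

lemma der_exists:
  assumes s: "s \<in> H1" shows "\<exists>v\<in>carrier R. derangement (carrier R) (\<lambda>x\<in>carrier R. s x \<oplus> v)"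
proof -
  have sH: "s \<in> H" and s1: "s \<one> = \<one>" using s by (auto simp: H1_def)
  let ?p = "\<lambda>x. x \<ominus> s x"
  have sub: "?p ` carrier R \<subseteq> carrier R" using H_closed[OF sH] by auto
  have "\<not> inj_on ?p (carrier R)"
  proof
    assume "inj_on ?p (carrier R)"
    moreover have "?p \<one> = ?p \<zero>" using s1 H_zero[OF sH] by (simp add: a_minus_def r_neg)
    ultimately have "\<one> = \<zero>" using inj_onD one_closed zero_closed by metis
    then show False by simp
  qed
  then have "?p ` carrier R \<noteq> carrier R" using fin
    by (metis card_image eq_card_imp_inj_on)
  then obtain v where v: "v \<in> carrier R" "v \<notin> ?p ` carrier R" using sub by blast
  have "derangement (carrier R) (\<lambda>x\<in>carrier R. s x \<oplus> v)"
    unfolding derangement_def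
  proof
    fix x assume x: "x \<in> carrier R"
    show "(\<lambda>x\<in>carrier R. s x \<oplus> v) x \<noteq> x"
    proof
      assume "(\<lambda>x\<in>carrier R. s x \<oplus> v) x = x"
      then have "s x \<oplus> v = x" using x by simp
      then have "v = x \<ominus> s x" using add_minus_cancel[OF H_closed[OF sH x] v(1)] by simp
      then show False using v x by blast
    qed
  qed
  then show ?thesis using v by blast
qed

end


lemma (in ring) minus_swap: assumes a: "a \<in> carrier R" and b: "b \<in> carrier R" and c: "c \<in> carrier R" and d: "d \<in> carrier R"
  and e: "a \<ominus> b = c \<ominus> d" shows "a \<ominus> c = b \<ominus> d"
proof -
  have "(a \<ominus> c) \<ominus> (b \<ominus> d) = (a \<ominus> b) \<ominus> (c \<ominus> d)" using a b c d by (simp add: a_minus_def minus_add a_ac)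
  also have "\<dots> = \<zero>" using e c d by (simp add: r_right_minus_eq)
  finally show ?thesis using a b c d by (simp add: r_right_minus_eq)
qed

context aff begin

lemma finite_A: "finite A"
  using finite_Bij[OF fin] A_Bij' by (meson finite_subset subsetI)

lemma finite_H: "finite H"
  using finite_Bij[OF fin] H_Bij by (meson finite_subset subsetI)

lemma one_H1: "\<one>\<^bsub>BG\<^esub> \<in> H1" using one_H by (simp add: H1_def BG_one)

lemma kappa_ge: "card H1 \<le> kappa (carrier R) A"
proof -
  let ?D = "{g \<in> A. derangement (carrier R) g}"
  define vs where "vs s = (SOME v. v \<in> carrier R \<and> derangement (carrier R) (\<lambda>x\<in>carrier R. s x \<oplus> v))" for s
  have vs: "vs s \<in> carrier R" "derangement (carrier R) (\<lambda>x\<in>carrier R. s x \<oplus> vs s)" if "s \<in> H1" for s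
  proof -
    have "\<exists>v. v \<in> carrier R \<and> derangement (carrier R) (\<lambda>x\<in>carrier R. s x \<oplus> v)" using der_exists[OF that] by blast
    from someI_ex[OF this] show "vs s \<in> carrier R" "derangement (carrier R) (\<lambda>x\<in>carrier R. s x \<oplus> vs s)"
      unfolding vs_def by auto
  qed
  let ?d = "\<lambda>s. (\<lambda>x\<in>carrier R. s x \<oplus> vs s)"
  have sH: "s \<in> H" if "s \<in> H1" for s using that by (simp add: H1_def)
  have dD: "?d s \<in> ?D" if "s \<in> H1" for s using A_I[OF sH[OF that] vs(1)[OF that]] vs(2)[OF that] by simp
  have inj: "inj_on (\<lambda>s. conj_class M (?d s)) H1"
  proof (rule inj_onI)
    fix s1 s2 assume s1: "s1 \<in> H1" and s2: "s2 \<in> H1" and e: "conj_class M (?d s1) = conj_class M (?d s2)"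
    have "?d s2 \<in> conj_class M (?d s1)" using e cc_self dD[OF s2] by simp
    then obtain k where k: "k \<in> H" "\<forall>x\<in>carrier R. k (s1 x) = s2 (k x)"
      using conj_lin[OF sH[OF s1] vs(1)[OF s1] sH[OF s2] vs(1)[OF s2]] by blast
    show "s1 = s2" using H1_rigid[OF s1 s2 k(1) k(2)] .
  qed
  have "card H1 = card ((\<lambda>s. conj_class M (?d s)) ` H1)" using card_image[OF inj] by simp
  also have "\<dots> \<le> card (conj_class M ` ?D)"
    by (rule card_mono) (use finite_A dD in auto)
  finally show ?thesis unfolding kappa_def .
qed

lemma kappa_le1:
  assumes tr: "\<And>y. y \<in> carrier R \<Longrightarrow> y \<noteq> \<zero> \<Longrightarrow> \<exists>h\<in>H. h \<one> = y"
    and H1e: "H1 = {\<one>\<^bsub>BG\<^esub>}"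
  shows "kappa (carrier R) A \<le> 1"
proof -
  interpret B: group BG by (rule BGg)
  have hc: "h \<in> carrier BG" if "h \<in> H" for h using H_Bij[OF that] by (simp add: BG_carrier)
  have fixpt: "h = \<one>\<^bsub>BG\<^esub>" if h: "h \<in> H" and x: "x \<in> carrier R" "x \<noteq> \<zero>" "h x = x" for h x
  proof -
    obtain g where g: "g \<in> H" "g \<one> = x" using tr x by blast
    have gi: "inv\<^bsub>BG\<^esub> g \<in> H" using H_inv(3)[OF g(1) one_closed] .
    let ?s = "inv\<^bsub>BG\<^esub> g \<otimes>\<^bsub>BG\<^esub> h \<otimes>\<^bsub>BG\<^esub> g"
    have sH: "?s \<in> H" using subgroup.m_closed[OF sub subgroup.m_closed[OF sub gi h] g(1)] .
    have "?s \<one> = (inv\<^bsub>BG\<^esub> g) (h (g \<one>))"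
      using H_mult[OF subgroup.m_closed[OF sub gi h] g(1) one_closed] H_mult[OF gi h] H_closed[OF g(1) one_closed] by simp
    also have "\<dots> = \<one>" using g x H_inv(1)[OF g(1) one_closed] by simp
    finally have "?s \<in> H1" using sH by (simp add: H1_def)
    then have s1: "?s = \<one>\<^bsub>BG\<^esub>" using H1e by simp
    have "h = g \<otimes>\<^bsub>BG\<^esub> ?s \<otimes>\<^bsub>BG\<^esub> inv\<^bsub>BG\<^esub> g"
    proof -
      have "h = g \<otimes>\<^bsub>BG\<^esub> (inv\<^bsub>BG\<^esub> g \<otimes>\<^bsub>BG\<^esub> h)"
        using B.inv_solve_left[of "inv\<^bsub>BG\<^esub> g \<otimes>\<^bsub>BG\<^esub> h" g h] hc[OF h] hc[OF g(1)] by simp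
      then show ?thesis using hc[OF h] hc[OF g(1)] by (simp add: B.m_assoc)
    qed
    then show ?thesis using s1 hc[OF g(1)] by simp
  qed
  let ?D = "{g \<in> A. derangement (carrier R) g}"
  let ?t = "\<lambda>x\<in>carrier R. \<one>\<^bsub>BG\<^esub> x \<oplus> \<one>"
  have tA: "?t \<in> A" using A_I[OF one_H one_closed] .
  have key: "conj_class M d = conj_class M ?t" if d: "d \<in> ?D" for d
  proof -
    obtain h v where h: "h \<in> H" and v: "v \<in> carrier R" and dd: "d = (\<lambda>x\<in>carrier R. h x \<oplus> v)"
      using d by (auto elim: A_E)
    have der: "\<And>x. x \<in> carrier R \<Longrightarrow> h x \<oplus> v \<noteq> x" using d dd by (auto simp: derangement_def)
    have h1: "h = \<one>\<^bsub>BG\<^esub>"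
    proof (rule ccontr)
      assume hn: "h \<noteq> \<one>\<^bsub>BG\<^esub>"
      let ?p = "\<lambda>x. x \<ominus> h x"
      have inj: "inj_on ?p (carrier R)"
      proof (rule inj_onI)
        fix x y assume x: "x \<in> carrier R" and y: "y \<in> carrier R" and e: "?p x = ?p y"
        have hx: "h x \<in> carrier R" "h y \<in> carrier R" using H_closed[OF h] x y by auto
        have "x \<ominus> y = h x \<ominus> h y" using minus_swap[OF x hx(1) y hx(2) e] .
        then have "h (x \<ominus> y) = x \<ominus> y" using H_minus[OF h x y] by simp
        then have "x \<ominus> y = \<zero>" using fixpt[OF h] hn x y by blast
        then show "x = y" using x y by (simp add: r_right_minus_eq)
      qed
      have "?p ` carrier R = carrier R" using endo_inj_surj[OF fin _ inj] H_closed[OF h] by auto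
      then obtain x where x: "x \<in> carrier R" "v = x \<ominus> h x" using v by auto
      have "h x \<oplus> v = x" using x add_minus_cancel2[OF H_closed[OF h x(1)] x(1)] by simp
      then show False using der x by blast
    qed
    have dd2: "d = (\<lambda>x\<in>carrier R. x \<oplus> v)" using dd h1 by (auto simp: BG_one intro!: restrict_ext)
    have "v \<noteq> \<zero>" using der[OF zero_closed] h1 v by (simp add: BG_one)
    then obtain k where k: "k \<in> H" "k \<one> = v" using tr v by blast
    let ?c = "\<lambda>x\<in>carrier R. k x \<oplus> \<zero>"
    have cA: "?c \<in> A" using A_I[OF k(1) zero_closed] .
    have cB: "?c \<in> carrier BG" and tB: "?t \<in> carrier BG" and dB: "d \<in> carrier BG"
      using A_Bij' cA tA d by (auto simp: BG_carrier)
    have "?c \<otimes>\<^bsub>BG\<^esub> ?t = d \<otimes>\<^bsub>BG\<^esub> ?c"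
    proof (rule Bij_eqI)
      show "?c \<otimes>\<^bsub>BG\<^esub> ?t \<in> Bij (carrier R)" "d \<otimes>\<^bsub>BG\<^esub> ?c \<in> Bij (carrier R)"
        using B.m_closed[OF cB tB] B.m_closed[OF dB cB] by (auto simp: BG_carrier)
      fix x assume x: "x \<in> carrier R"
      have "(?c \<otimes>\<^bsub>BG\<^esub> ?t) x = ?c (?t x)" using cB tB x by (intro BG_mult) (auto simp: BG_carrier)
      also have "\<dots> = k x \<oplus> v" using x k v H_add[OF k(1) x one_closed] H_closed[OF k(1) x] by (simp add: BG_one)
      also have "\<dots> = d (?c x)" using x dd2 v H_closed[OF k(1) x] by simp
      also have "\<dots> = (d \<otimes>\<^bsub>BG\<^esub> ?c) x"
        using BG_mult[OF dB[unfolded BG_carrier] cB[unfolded BG_carrier] x] by simp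
      finally show "(?c \<otimes>\<^bsub>BG\<^esub> ?t) x = (d \<otimes>\<^bsub>BG\<^esub> ?c) x" .
    qed
    then have "d = ?c \<otimes>\<^bsub>BG\<^esub> ?t \<otimes>\<^bsub>BG\<^esub> inv\<^bsub>BG\<^esub> ?c" using cB tB dB by (simp add: B.m_assoc)
    then show ?thesis using cc_conj[OF cA tA] by simp
  qed
  have "conj_class M ` ?D \<subseteq> {conj_class M ?t}" using key by auto
  then have "card (conj_class M ` ?D) \<le> card {conj_class M ?t}" by (intro card_mono) auto
  then have "card (conj_class M ` ?D) \<le> 1" by simp
  then show ?thesis unfolding kappa_def .
qed

lemma card_H1_2:
  assumes tr: "\<And>y. y \<in> carrier R \<Longrightarrow> y \<noteq> \<zero> \<Longrightarrow> \<exists>h\<in>H. h \<one> = y"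
    and k2: "kappa (carrier R) A = 2"
  shows "card H1 = 2"
proof -
  have fH1: "finite H1" using finite_H by (simp add: H1_def)
  have "card H1 \<noteq> 1"
  proof
    assume "card H1 = 1"
    then obtain a where "H1 = {a}" by (rule card_1_singletonE)
    then have "H1 = {\<one>\<^bsub>BG\<^esub>}" using one_H1 by simp
    then show False using kappa_le1[OF tr] k2 by simp
  qed
  moreover have "card H1 \<noteq> 0" using fH1 one_H1 by auto
  moreover have "card H1 \<le> 2" using kappa_ge k2 by simp
  ultimately show ?thesis by linarith
qed

end


context ring begin
lemma sum_swap: assumes x: "x \<in> carrier R" and y: "y \<in> carrier R" and z: "z \<in> carrier R" and w: "w \<in> carrier R"
  and e: "x \<oplus> y = z \<oplus> w" shows "x \<ominus> z = w \<ominus> y"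
proof -
  have "(x \<ominus> z) \<ominus> (w \<ominus> y) = (x \<oplus> y) \<ominus> (z \<oplus> w)" using x y z w by (simp add: a_minus_def minus_add a_ac)
  also have "\<dots> = \<zero>" using e z w by (simp add: r_right_minus_eq)
  finally show ?thesis using x y z w by (simp add: r_right_minus_eq)
qed
lemma r_diff: "l \<in> carrier R \<Longrightarrow> a \<in> carrier R \<Longrightarrow> b \<in> carrier R \<Longrightarrow> l \<otimes> (a \<ominus> b) = l \<otimes> a \<ominus> l \<otimes> b"
  by (simp add: a_minus_def r_distr r_minus)
lemma l_diff: "u \<in> carrier R \<Longrightarrow> a \<in> carrier R \<Longrightarrow> b \<in> carrier R \<Longrightarrow> (a \<ominus> b) \<otimes> u = a \<otimes> u \<ominus> b \<otimes> u"
  by (simp add: a_minus_def l_distr l_minus)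
lemma neg_diff: "a \<in> carrier R \<Longrightarrow> b \<in> carrier R \<Longrightarrow> \<ominus> (a \<ominus> b) = b \<ominus> a"
  by (simp add: a_minus_def minus_add a_comm)
lemma minus_add_cancel: assumes x: "x \<in> carrier R" and y: "y \<in> carrier R" shows "(x \<ominus> y) \<oplus> y = x"
proof -
  have "(x \<ominus> y) \<oplus> y = x \<oplus> (\<ominus> y \<oplus> y)" using x y by (simp add: a_minus_def a_assoc)
  also have "\<dots> = x" using x y by (simp add: l_neg)
  finally show ?thesis .
qed
end

lemma (in field) fixfield:
  assumes fh: "f \<in> ring_hom R R" and inv2: "\<And>x. x \<in> carrier R \<Longrightarrow> f (f x) = x"
    and t: "t \<in> carrier R" and ft: "f t \<noteq> t"
  shows "card (carrier R) = card {x\<in>carrier R. f x = x} * card {x\<in>carrier R. f x = x}"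
proof -
  interpret h: ring_hom_cring R R f
    by (simp add: ring_hom_cring_def ring_hom_cring_axioms_def fh is_cring)
  define K where "K = {x\<in>carrier R. f x = x}"
  have fm: "f (a \<ominus> b) = f a \<ominus> f b" if "a \<in> carrier R" "b \<in> carrier R" for a b
    using that by (simp add: a_minus_def)
  have ftc: "f t \<in> carrier R" using t by simp
  have "bij_betw (\<lambda>(a,b). a \<oplus> b \<otimes> t) (K \<times> K) (carrier R)"
  proof (rule bij_betw_imageI)
    show "inj_on (\<lambda>(a,b). a \<oplus> b \<otimes> t) (K \<times> K)"
    proof (rule inj_onI, clarify)
      fix a b a' b' assume a: "a \<in> K" and b: "b \<in> K" and a': "a' \<in> K" and b': "b' \<in> K"
        and e: "a \<oplus> b \<otimes> t = a' \<oplus> b' \<otimes> t"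
      have c: "a \<in> carrier R" "b \<in> carrier R" "a' \<in> carrier R" "b' \<in> carrier R"
        and fx: "f a = a" "f b = b" "f a' = a'" "f b' = b'" using a b a' b' by (auto simp: K_def)
      have e2: "a \<oplus> b \<otimes> f t = a' \<oplus> b' \<otimes> f t"
      proof -
        have "f (a \<oplus> b \<otimes> t) = f (a' \<oplus> b' \<otimes> t)" using e by simp
        then show ?thesis using c t fx by simp
      qed
      have d1: "a \<ominus> a' = b' \<otimes> t \<ominus> b \<otimes> t" using sum_swap[OF c(1) _ c(3) _ e] c t by simp
      have d2: "a \<ominus> a' = b' \<otimes> f t \<ominus> b \<otimes> f t" using sum_swap[OF c(1) _ c(3) _ e2] c ftc by simp
      have "(b' \<ominus> b) \<otimes> t = (b' \<ominus> b) \<otimes> f t" using d1 d2 l_diff c t ftc by simp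
      then have bb: "b' \<ominus> b = \<zero>"
        using m_lcancel[of "b' \<ominus> b" t "f t"] c t ftc ft by (metis minus_closed)
      then have "b = b'" using c by (simp add: r_right_minus_eq)
      moreover then have "a = a'" using e c t by simp
      ultimately show "a = a' \<and> b = b'" by simp
    qed
    show "(\<lambda>(a,b). a \<oplus> b \<otimes> t) ` (K \<times> K) = carrier R"
    proof
      show "(\<lambda>(a,b). a \<oplus> b \<otimes> t) ` (K \<times> K) \<subseteq> carrier R" using t by (auto simp: K_def)
      show "carrier R \<subseteq> (\<lambda>(a,b). a \<oplus> b \<otimes> t) ` (K \<times> K)"
      proof
        fix x assume x: "x \<in> carrier R"
        have fxc: "f x \<in> carrier R" using x by simp
        define s where "s = t \<ominus> f t"
        define u where "u = x \<ominus> f x"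
        have sc: "s \<in> carrier R" and uc: "u \<in> carrier R" using t ftc x fxc by (auto simp: s_def u_def)
        have s0: "s \<noteq> \<zero>" using t ftc ft by (simp add: s_def r_right_minus_eq)
        have isc: "inv s \<in> carrier R" using sc s0 by (simp add: field_Units)
        have sis: "inv s \<otimes> s = \<one>" using sc s0 by (simp add: field_Units)
        define l where "l = u \<otimes> inv s"
        have lc: "l \<in> carrier R" using uc isc by (simp add: l_def)
        have ls: "l \<otimes> s = u" using uc isc sc sis by (simp add: l_def m_assoc)
        have fu: "f u = \<ominus> u" using x fxc inv2[OF x] by (simp add: u_def fm neg_diff)
        have fs: "f s = \<ominus> s" using t ftc inv2[OF t] by (simp add: s_def fm neg_diff)
        have flc: "f l \<in> carrier R" using lc by simp
        have "f l \<otimes> (\<ominus> s) = l \<otimes> (\<ominus> s)"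
        proof -
          have "f l \<otimes> (\<ominus> s) = f (l \<otimes> s)" using lc sc fs by simp
          also have "\<dots> = \<ominus> u" using ls fu by simp
          also have "\<dots> = l \<otimes> (\<ominus> s)" using ls lc sc by (simp add: r_minus)
          finally show ?thesis .
        qed
        moreover have "\<ominus> s \<noteq> \<zero>"
        proof
          assume "\<ominus> s = \<zero>"
          then have "\<ominus> (\<ominus> s) = \<ominus> \<zero>" by simp
          then show False using s0 sc by simp
        qed
        ultimately have fl: "f l = l" using m_rcancel[of "\<ominus> s" "f l" l] flc lc sc by simp
        define a where "a = x \<ominus> l \<otimes> t"
        have ac: "a \<in> carrier R" using x lc t by (simp add: a_def)
        have "l \<otimes> t \<ominus> l \<otimes> f t = u" using r_diff[OF lc t ftc] ls by (simp add: s_def)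
        then have "x \<ominus> f x = l \<otimes> t \<ominus> l \<otimes> f t" by (simp add: u_def)
        then have "x \<ominus> l \<otimes> t = f x \<ominus> l \<otimes> f t" by (rule minus_swap[OF x fxc m_closed[OF lc t] m_closed[OF lc ftc]])
        moreover have "f a = f x \<ominus> l \<otimes> f t" using x lc t fl by (simp add: a_def fm)
        ultimately have fa: "f a = a" by (simp add: a_def)
        have "x = a \<oplus> l \<otimes> t" unfolding a_def using minus_add_cancel[OF x m_closed[OF lc t]] by simp
        moreover have "(a, l) \<in> K \<times> K" using ac lc fa fl by (simp add: K_def)
        ultimately show "x \<in> (\<lambda>(a,b). a \<oplus> b \<otimes> t) ` (K \<times> K)" by force
      qed
    qed
  qed
  then have "card (carrier R) = card (K \<times> K)" by (simp add: bij_betw_same_card)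
  then show ?thesis by (simp add: K_def card_cartesian_product)
qed



lemma even_of_square:
  fixes p k m :: nat
  assumes p: "Factorial_Ring.prime p" and e: "p ^ k = m * m"
  shows "even k"
proof -
  have pe: "prime_elem p" using p by simp
  have m0: "m \<noteq> 0" using e p by (metis mult_0 power_not_zero prime_gt_0_nat less_irrefl)
  have "k = multiplicity p (p ^ k)" using pe by simp
  also have "\<dots> = multiplicity p m + multiplicity p m" using e prime_elem_multiplicity_mult_distrib[OF pe m0 m0] by simp
  finally show ?thesis by simp
qed

theorem proposition4p9:
  fixes F :: "('a, 'b) ring_scheme" and H :: "('a \<Rightarrow> 'a) set" and p k :: nat
  assumes "field F" and "finite (carrier F)"
    and "Factorial_Ring.prime p" and "card (carrier F) = p ^ k"
    and "subgroup H (BijGroup (carrier F))"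
    and "H \<subseteq> gammaL1 F"
    and "two_transitive (carrier F) (affine_group F H)"
    and "\<not> frobenius (carrier F) (affine_group F H)"
    and "kappa (carrier F) (affine_group F H) = 2"
  shows "even k \<and> card H = 2 * (p ^ k - 1)"
proof -
  interpret a: aff F H using assms(1,2,5,6) by (simp add: aff_def aff_axioms_def)
  interpret B: group "BijGroup (carrier F)" by (rule group_BijGroup)
  have tr: "\<exists>h\<in>H. h \<one>\<^bsub>F\<^esub> = y" if "y \<in> carrier F" "y \<noteq> \<zero>\<^bsub>F\<^esub>" for y
    using a.trans1[of y] that assms(7) by (simp add: a.A_def)
  have c2: "card a.H1 = 2" using a.card_H1_2[OF tr] assms(9) by (simp add: a.A_def)
  have cH: "card H = 2 * (p ^ k - 1)" using a.orbit_stab[OF tr] c2 assms(4) by simp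
  have fH1: "finite a.H1" using a.finite_H by (simp add: a.H1_def)
  obtain s where sH1: "s \<in> a.H1" and sn: "s \<noteq> \<one>\<^bsub>BijGroup (carrier F)\<^esub>"
  proof -
    have "\<not> a.H1 \<subseteq> {\<one>\<^bsub>BijGroup (carrier F)\<^esub>}"
    proof
      assume "a.H1 \<subseteq> {\<one>\<^bsub>BijGroup (carrier F)\<^esub>}"
      then have "card a.H1 \<le> card {\<one>\<^bsub>BijGroup (carrier F)\<^esub>}" by (intro card_mono) auto
      then show False using c2 by simp
    qed
    then show ?thesis using that by blast
  qed
  have sH: "s \<in> H" and s1: "s \<one>\<^bsub>F\<^esub> = \<one>\<^bsub>F\<^esub>" using sH1 by (auto simp: a.H1_def)
  have sc: "s \<in> carrier (BijGroup (carrier F))" using a.H_Bij[OF sH] by (simp add: BG_carrier)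
  have H1e: "a.H1 = {\<one>\<^bsub>BijGroup (carrier F)\<^esub>, s}"
  proof -
    have sub: "{\<one>\<^bsub>BijGroup (carrier F)\<^esub>, s} \<subseteq> a.H1" using a.one_H1 sH1 by simp
    have "card {\<one>\<^bsub>BijGroup (carrier F)\<^esub>, s} = 2" using sn by simp
    then show ?thesis using card_subset_eq[OF fH1 sub] c2 by simp
  qed
  have ssH: "s \<otimes>\<^bsub>BijGroup (carrier F)\<^esub> s \<in> H" using subgroup.m_closed[OF assms(5) sH sH] .
  have "(s \<otimes>\<^bsub>BijGroup (carrier F)\<^esub> s) \<one>\<^bsub>F\<^esub> = \<one>\<^bsub>F\<^esub>" using a.H_mult[OF sH sH] s1 by simp
  then have "s \<otimes>\<^bsub>BijGroup (carrier F)\<^esub> s \<in> a.H1" using ssH by (simp add: a.H1_def)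
  then have "s \<otimes>\<^bsub>BijGroup (carrier F)\<^esub> s = \<one>\<^bsub>BijGroup (carrier F)\<^esub> \<or> s \<otimes>\<^bsub>BijGroup (carrier F)\<^esub> s = s"
    using H1e by simp
  moreover have "s \<otimes>\<^bsub>BijGroup (carrier F)\<^esub> s \<noteq> s" using B.r_cancel_one[OF sc sc] sn by simp
  ultimately have ss1: "s \<otimes>\<^bsub>BijGroup (carrier F)\<^esub> s = \<one>\<^bsub>BijGroup (carrier F)\<^esub>" by simp
  obtain f where f: "f \<in> ring_iso F F" and sf: "\<forall>x\<in>carrier F. s x = f x" using a.H1_aut[OF sH1] by blast
  have fh: "f \<in> ring_hom F F" using f by (simp add: ring_iso_def)
  have ff: "f (f x) = x" if x: "x \<in> carrier F" for x
  proof -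
    have "(s \<otimes>\<^bsub>BijGroup (carrier F)\<^esub> s) x = x" using ss1 x by (simp add: BG_one)
    then have "s (s x) = x" using a.H_mult[OF sH sH x] by simp
    then show ?thesis using sf x a.H_closed[OF sH x] by simp
  qed
  obtain t where t: "t \<in> carrier F" "f t \<noteq> t"
  proof -
    have "\<exists>t\<in>carrier F. f t \<noteq> t"
    proof (rule ccontr)
      assume "\<not> (\<exists>t\<in>carrier F. f t \<noteq> t)"
      then have "\<And>x. x \<in> carrier F \<Longrightarrow> s x = \<one>\<^bsub>BijGroup (carrier F)\<^esub> x" using sf by (simp add: BG_one)
      then have "s = \<one>\<^bsub>BijGroup (carrier F)\<^esub>" using Bij_eqI[OF a.H_Bij[OF sH], of "\<one>\<^bsub>BijGroup (carrier F)\<^esub>"]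
        by (simp add: BG_one id_Bij)
      then show False using sn by simp
    qed
    then show ?thesis using that by blast
  qed
  have "card (carrier F) = card {x\<in>carrier F. f x = x} * card {x\<in>carrier F. f x = x}"
    using a.fixfield[OF fh ff t] by simp
  then have "even k" using even_of_square[OF assms(3)] assms(4) by simp
  then show ?thesis using cH by simp
qed


end
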